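(* Let $\mathbb{A}$ be the structure defined in the context, let $t:A^k\to A$ be a polymorphism of $\mathbb{A}$, and let $i\in\{0,\dots,n\}$. Let $l_a,l_i,l_{i+1},\dots,l_n\in\mathbb{N}_0$ satisfy $m\cdot l_a+l_i+l_{i+1}+\dots+l_n=k$. For $j\in\{1,\dots,m\}$ let $\mathbf{w}_j\in A^k$ be the tuple consisting of $m$ consecutive blocks of length $l_a$, where the $j$-th block consists of $a$'s and every other block consists of $i$'s, followed by $l_i$ copies of $i$, then $l_{i+1}$ copies of $i+1$, ..., then $l_n$ copies of $n$. Suppose $t(\mathbf{w}_j)=i$ for all $j\in\{1,\dots,m\}$. Then $$t(\underbrace{a,\dots,a}_{m\cdot l_a},x_1,\dots,x_{l_i},\underbrace{i+1,\dots,i+1}_{l_{i+1}},\dots,\underbrace{n,\dots,n}_{l_n})\neq a$$ for all $x_1,\dots,x_{l_i}\in\{0,1,\dots,i-1\}$. The same holds if one fixed permutation of the $k$ coordinate positions is applied to all the tuples $\mathbf{w}_1,\dots,\mathbf{w}_m$ and to the tuple in the conclusion.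
   Context: Fix integers $n\ge 0$ and $m\ge 2$. Let $A=\{a,0,1,\dots,n\}$. For $i\in\{0,\dots,n+1\}$ let $A_i=\{a,0,1,\dots,i-1\}$, so $A_0=\{a\}$ and $A_{n+1}=A$. For $i\in\{0,\dots,n\}$ let $S_i\subseteq A^{m+1}$ be the relation $$S_i=\Big(A_i\times\{a,i\}^m\setminus\{(a,i,i,\dots,i)\}\Big)\cup\{(j,j,\dots,j)\in A^{m+1}: i<j\le n\}.$$ Let $\mathbb{A}$ be the relational structure with universe $A$ whose relations are $S_0,\dots,S_n$ (each of arity $m+1$) together with every nonempty subset $X\subseteq A$ as a unary relation. A polymorphism of $\mathbb{A}$ is an operation $t:A^k\to A$ compatible with all these relations, where compatibility with a relation $R$ means that applying $t$ coordinatewise to any $k$ tuples of $R$ yields a tuple of $R$. *)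

theory Defs
  imports Main
begin

datatype elem = Aa | N nat

definition univ :: "nat \<Rightarrow> elem set" where
  "univ n = insert Aa (N ` {..n})"

definition Aset :: "nat \<Rightarrow> elem set" where
  "Aset i = insert Aa (N ` {..<i})"

definition Srel :: "nat \<Rightarrow> nat \<Rightarrow> nat \<Rightarrow> elem list set" where
  "Srel n m i =
     ({r. length r = m + 1 \<and> r ! 0 \<in> Aset i \<and> (\<forall>p\<in>{1..m}. r ! p \<in> {Aa, N i})}
        - {Aa # replicate m (N i)})
     \<union> {replicate (m + 1) (N j) | j. i < j \<and> j \<le> n}"

definition compatible :: "nat \<Rightarrow> nat \<Rightarrow> (elem list \<Rightarrow> elem) \<Rightarrow> elem list set \<Rightarrow> bool" where
  "compatible k ar t R \<longleftrightarrow>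
     (\<forall>rs. length rs = k \<longrightarrow> (\<forall>r\<in>set rs. r \<in> R) \<longrightarrow>
        map (\<lambda>p. t (map (\<lambda>r. r ! p) rs)) [0..<ar] \<in> R)"

definition polymorphism :: "nat \<Rightarrow> nat \<Rightarrow> nat \<Rightarrow> (elem list \<Rightarrow> elem) \<Rightarrow> bool" where
  "polymorphism n m k t \<longleftrightarrow>
     (\<forall>i\<le>n. compatible k (m + 1) t (Srel n m i)) \<and>
     (\<forall>X. X \<noteq> {} \<and> X \<subseteq> univ n \<longrightarrow> compatible k 1 t {[x] | x. x \<in> X})"

definition wtuple :: "nat \<Rightarrow> nat \<Rightarrow> nat \<Rightarrow> nat \<Rightarrow> (nat \<Rightarrow> nat) \<Rightarrow> nat \<Rightarrow> elem list" where
  "wtuple n m i la l j =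
     concat (map (\<lambda>q. if q = j then replicate la Aa else replicate la (N i)) [1..<m + 1])
     @ concat (map (\<lambda>q. replicate (l q) (N q)) [i..<n + 1])"

definition permute_tuple :: "nat \<Rightarrow> (nat \<Rightarrow> nat) \<Rightarrow> elem list \<Rightarrow> elem list" where
  "permute_tuple k \<sigma> u = map (\<lambda>p. u ! \<sigma> p) [0..<k]"

end

theory Submission
  imports Defs
begin

lemma concat_nth_blocks:
  "(\<forall>q\<in>set qs. length (f q) = la) \<Longrightarrow> d < length qs * la \<Longrightarrow>
   concat (map f qs) ! d = f (qs ! (d div la)) ! (d mod la)"
proof (induction qs arbitrary: d)
  case Nil then show ?case by simp
next
  case (Cons q qs)
  have lq: "length (f q) = la" using Cons.prems by simp
  show ?case
  proof (cases "d < la")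
    case True
    then show ?thesis using lq by (simp add: nth_append)
  next
    case False
    have "d - la < length qs * la" using Cons.prems False by simp
    then have IH: "concat (map f qs) ! (d - la) = f (qs ! ((d - la) div la)) ! ((d - la) mod la)"
      using Cons by simp
    have la0: "la > 0" using Cons.prems by (cases la) auto
    have e1: "(d - la) div la = d div la - 1" using False la0
      by (simp add: le_div_geq)
    have e2: "(d - la) mod la = d mod la" using False
      by (simp add: le_mod_geq)
    have e3: "d div la \<ge> 1" using False la0 by (simp add: le_div_geq)
    have "concat (map f (q # qs)) ! d = concat (map f qs) ! (d - la)"
      using False lq by (simp add: nth_append)
    also have "\<dots> = f (qs ! (d div la - 1)) ! (d mod la)" using IH e1 e2 by simp
    also have "\<dots> = f ((q # qs) ! (d div la)) ! (d mod la)" using e3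
      by (cases "d div la") auto
    finally show ?thesis .
  qed
qed

lemma len_tail:
  "length (concat (map (\<lambda>q. replicate (l q) (N q)) [a..<b])) = sum_list (map l [a..<b])"
  by (simp add: length_concat o_def)

lemma column_in:
  fixes n m i la :: nat and l :: "nat \<Rightarrow> nat" and xs :: "elem list"
  assumes m1: "m \<ge> 1" and inn: "i \<le> n"
    and lx: "length xs = l i" and sx: "set xs \<subseteq> N ` {..<i}"
    and dk: "d < m * la + (\<Sum>q=i..n. l q)"
  defines "T' \<equiv> concat (map (\<lambda>q. replicate (l q) (N q)) [i+1..<n + 1])"
  defines "U \<equiv> replicate (m * la) Aa @ xs @ T'"
  shows "(U ! d) # map (\<lambda>j. wtuple n m i la l j ! d) [1..<m+1] \<in> Srel n m i"
proof -
  define B where "B j = concat (map (\<lambda>q. if q = j then replicate la Aa else replicate la (N i)) [1..<m + 1])" for j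
  have ups: "[i..<n+1] = i # [i+1..<n+1]" using inn by (simp add: upt_conv_Cons)
  have W: "wtuple n m i la l j = B j @ (replicate (l i) (N i) @ T')" for j
    unfolding wtuple_def B_def T'_def using ups by simp
  have lB: "length (B j) = m * la" for j
  proof -
    have "(\<lambda>q. length (if q = j then replicate la Aa else replicate la (N i))) = (\<lambda>q. la)"
      by auto
    then show ?thesis unfolding B_def by (simp add: length_concat o_def sum_list_triv)
  qed
  have sumeq: "(\<Sum>q=i..n. l q) = l i + length T'"
  proof -
    have "set [i..<n+1] = {i..n}" by auto
    then have "(\<Sum>q=i..n. l q) = sum l (set [i..<n+1])"
      by simp
    also have "\<dots> = sum_list (map l [i..<n+1])" by (rule sum_set_upt_conv_sum_list_nat)
    also have "\<dots> = l i + sum_list (map l [i+1..<n+1])" using ups by simp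
    finally show ?thesis unfolding T'_def len_tail by simp
  qed
  have Sdef: "Srel n m i =
     ({r. length r = m + 1 \<and> r ! 0 \<in> Aset i \<and> (\<forall>p\<in>{1..m}. r ! p \<in> {Aa, N i})}
        - {Aa # replicate m (N i)})
     \<union> {replicate (m + 1) (N j) | j. i < j \<and> j \<le> n}" by (rule Srel_def)
  show ?thesis
  proof (cases "d < m * la")
    case True
    have la0: "la > 0" using True by (cases la) auto
    define q0 where "q0 = d div la + 1"
    have q0m: "q0 \<le> m" "q0 \<ge> 1" unfolding q0_def using True la0
      by (auto simp: Suc_le_eq less_mult_imp_div_less mult.commute)
    have Bd: "B j ! d = (if q0 = j then Aa else N i)" for j
    proof -
      have "B j ! d = (\<lambda>q. if q = j then replicate la Aa else replicate la (N i)) ([1..<m + 1] ! (d div la)) ! (d mod la)"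
        unfolding B_def by (rule concat_nth_blocks) (use True m1 in auto)
      moreover have "[1..<m + 1] ! (d div la) = q0" unfolding q0_def
        using q0m unfolding q0_def by (simp del: upt_Suc add: nth_upt)
      moreover have "d mod la < la" using la0 by simp
      ultimately show ?thesis by auto
    qed
    have Ud: "U ! d = Aa" unfolding U_def using True by (simp add: nth_append)
    have col: "(U ! d) # map (\<lambda>j. wtuple n m i la l j ! d) [1..<m+1]
       = Aa # map (\<lambda>j. if q0 = j then Aa else N i) [1..<m+1]"
      using Ud W lB True Bd by (simp add: nth_append)
    have ne: "Aa # map (\<lambda>j. if q0 = j then Aa else N i) [1..<m+1] \<noteq> Aa # replicate m (N i)"
    proof
      assume h: "Aa # map (\<lambda>j. if q0 = j then Aa else N i) [1..<m+1] = Aa # replicate m (N i)"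
      have "(Aa # map (\<lambda>j. if q0 = j then Aa else N i) [1..<m+1]) ! q0 = Aa"
        using q0m by (cases q0) (auto simp del: upt_Suc)
      moreover have "(Aa # replicate m (N i)) ! q0 = N i"
        using q0m by (cases q0) (auto simp del: upt_Suc)
      ultimately show False using h by simp
    qed
    show ?thesis unfolding col Sdef using ne
      by (auto simp del: upt_Suc simp: Aset_def nth_Cons split: nat.splits)
  next
    case False
    define e where "e = d - m * la"
    have Wd: "wtuple n m i la l j ! d = (replicate (l i) (N i) @ T') ! e" for j
      unfolding W e_def using False lB by (simp add: nth_append)
    have Ud: "U ! d = (xs @ T') ! e" unfolding U_def e_def using False by (simp add: nth_append)
    have el: "e < l i + length T'" unfolding e_def using dk sumeq False by simp
    show ?thesis
    proof (cases "e < l i")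
      case True
      have x: "xs ! e \<in> N ` {..<i}" using sx True lx nth_mem by fastforce
      have col: "(U ! d) # map (\<lambda>j. wtuple n m i la l j ! d) [1..<m+1]
         = (xs ! e) # replicate m (N i)"
        using Ud Wd True lx by (simp add: nth_append map_replicate_const)
      have "(xs ! e) # replicate m (N i) \<in> Srel n m i" unfolding Sdef using x
        by (auto simp: Aset_def nth_Cons split: nat.splits)
      then show ?thesis using col by simp
    next
      case False
      define f where "f = e - l i"
      have fl: "f < length T'" unfolding f_def using el False by simp
      have "T' ! f \<in> set T'" using fl by simp
      then obtain q where q: "i < q" "q \<le> n" "T' ! f = N q" unfolding T'_def by auto
      have col: "(U ! d) # map (\<lambda>j. wtuple n m i la l j ! d) [1..<m+1]
         = replicate (m+1) (N q)"
        using Ud Wd False lx q(3) by (simp add: nth_append map_replicate_const f_def)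
      show ?thesis unfolding col Sdef using q by blast
    qed
  qed
qed

theorem mainTheorem6:
  fixes n m k i la :: nat and l :: "nat \<Rightarrow> nat" and t :: "elem list \<Rightarrow> elem"
    and \<sigma> :: "nat \<Rightarrow> nat" and xs :: "elem list"
  assumes "m \<ge> 2"
    and "polymorphism n m k t"
    and "i \<le> n"
    and "m * la + (\<Sum>q=i..n. l q) = k"
    and "bij_betw \<sigma> {..<k} {..<k}"
    and "\<And>j. j \<in> {1..m} \<Longrightarrow> t (permute_tuple k \<sigma> (wtuple n m i la l j)) = N i"
    and "length xs = l i"
    and "set xs \<subseteq> N ` {..<i}"
  shows "t (permute_tuple k \<sigma>
           (replicate (m * la) Aa @ xs @ concat (map (\<lambda>q. replicate (l q) (N q)) [i+1..<n + 1])))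
         \<noteq> Aa"
proof
  define U where "U = replicate (m * la) Aa @ xs @ concat (map (\<lambda>q. replicate (l q) (N q)) [i+1..<n + 1])"
  define pu where "pu = permute_tuple k \<sigma> U"
  define pw where "pw j = permute_tuple k \<sigma> (wtuple n m i la l j)" for j
  define rows where "rows = pu # map pw [1..<m+1]"
  define rs where "rs = map (\<lambda>c. map (\<lambda>r. r ! c) rows) [0..<k]"
  assume ta: "t pu = Aa"
  have comp: "compatible k (m + 1) t (Srel n m i)"
    using assms(2,3) unfolding polymorphism_def by blast
  have lrows: "length rows = m + 1" unfolding rows_def by simp
  have lr: "r \<in> set rows \<Longrightarrow> length r = k" for r
    unfolding rows_def pu_def pw_def permute_tuple_def by auto
  have rsin: "\<forall>r\<in>set rs. r \<in> Srel n m i"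
  proof
    fix r assume "r \<in> set rs"
    then obtain c where c: "c < k" "r = map (\<lambda>r. r ! c) rows" unfolding rs_def by auto
    have sc: "\<sigma> c < k" using assms(5) c(1) by (auto simp: bij_betw_def)
    have "r = (U ! \<sigma> c) # map (\<lambda>j. wtuple n m i la l j ! \<sigma> c) [1..<m+1]"
      unfolding c(2) rows_def pu_def pw_def permute_tuple_def using c(1) by simp
    moreover have "\<dots> \<in> Srel n m i" unfolding U_def
      by (rule column_in) (use assms sc in auto)
    ultimately show "r \<in> Srel n m i" by simp
  qed
  have out: "map (\<lambda>p. t (map (\<lambda>r. r ! p) rs)) [0..<m+1] \<in> Srel n m i"
  proof -
    have "length rs = k" unfolding rs_def by simp
    then show ?thesis using comp rsin unfolding compatible_def by blast
  qed
  have lrs: "length rs = k" unfolding rs_def by simp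
  have col: "map (\<lambda>r. r ! p) rs = rows ! p" if p: "p < m + 1" for p
  proof (rule nth_equalityI)
    have "rows ! p \<in> set rows" using p lrows by (simp only: nth_mem)
    then show "length (map (\<lambda>r. r ! p) rs) = length (rows ! p)" using lr lrs by simp
    fix c assume "c < length (map (\<lambda>r. r ! p) rs)"
    then have c: "c < k" using lrs by simp
    have "rs ! c = map (\<lambda>r. r ! c) rows" unfolding rs_def using c by (simp only: nth_map_upt) simp
    then show "map (\<lambda>r. r ! p) rs ! c = rows ! p ! c" using c lrs p lrows by simp
  qed
  have "map (\<lambda>p. t (map (\<lambda>r. r ! p) rs)) [0..<m+1] = map (\<lambda>p. t (rows ! p)) [0..<m+1]"
    by (rule map_cong) (use col in \<open>auto simp del: upt_Suc\<close>)
  also have "\<dots> = map t rows"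
  proof -
    have "map t rows = map t (map ((!) rows) [0..<length rows])" by (simp only: map_nth)
    then show ?thesis using lrows by (simp only: map_map o_def)
  qed
  also have "\<dots> = Aa # replicate m (N i)"
  proof -
    have "map (t \<circ> pw) [1..<m+1] = map (\<lambda>_. N i) [1..<m+1]"
      using assms(6) unfolding pw_def by (auto simp del: upt_Suc)
    then show ?thesis unfolding rows_def using ta by (simp del: upt_Suc add: map_replicate_const)
  qed
  finally have "Aa # replicate m (N i) \<in> Srel n m i" using out by simp
  then show False unfolding Srel_def by (auto simp: replicate_Suc)
qed

end
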